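(* Let $A,B$ be smooth functions of $\rho$ on an interval containing $[\rho_-,\rho_+]$ with $A^2+B^2=1$ at $\rho=\rho_\pm$ and $A^2+B^2>1$ on $(\rho_-,\rho_+)$. Suppose $A<0$ on $(\rho_-,\rho_+)$, that $A(\rho)=-1$ for exactly two values $\rho_1<\rho_2$ in $(\rho_-,\rho_+)$, and that there is $\rho_0\in(\rho_1,\rho_2)$ with $B(\rho_0)=0$, $B>0$ on $(\rho_-,\rho_0)$ and $B<0$ on $(\rho_0,\rho_+)$. Then the $(+)$ family generates exactly one horizon, the circle $\rho=\rho_1$, and the $(-)$ family generates exactly one horizon, the circle $\rho=\rho_2$.
   Context: Acoustic metric in the plane with polar coordinates $(\rho,\varphi)$: Hamiltonian $H=(\tau+A\xi_\rho+B\xi_\varphi/\rho)^2-\xi_\rho^2-(\xi_\varphi/\rho)^2$, $A=A(\rho)$, $B=B(\rho)$. The ergoregion is the annulus $\rho_-<\rho<\rho_+$ where $A^2+B^2>1$. Zero-energy null geodesics are the null bicharacteristics with $\tau=0$ parametrized by $t$; on them $\xi_\rho=\frac{-AB\pm\sqrt{A^2+B^2-1}}{A^2-1}\,\xi_\varphi/\rho$, the sign defining the $(\pm)$ family. Writing $s=\sqrt{A^2+B^2-1}$, their equations of motion in the ergoregion are $$\frac{d\rho^\pm}{dt}=\frac{A(A^2+B^2-1)\pm Bs}{A^2+B^2},\qquad \frac{d\varphi^\pm}{dt}=\frac{s\,(Bs\mp A)}{\rho\,(A^2+B^2)}.$$ A horizon generated by the $(\pm)$ family is a circle $\{\rho=c\}$,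 $c\in(\rho_-,\rho_+)$, which is a closed trajectory of that family, i.e. $d\rho^\pm/dt=0$ and $d\varphi^\pm/dt\neq0$ at $\rho=c$. *)

theory Defs
  imports "HOL-Analysis.Analysis"
begin

definition smooth_on :: "real set \<Rightarrow> (real \<Rightarrow> real) \<Rightarrow> bool" where
  "smooth_on S f \<longleftrightarrow> open S \<and> (\<forall>n. \<forall>x\<in>S. ((deriv ^^ n) f) differentiable (at x))"

text \<open>Equations of motion of zero-energy null geodesics in the ergoregion.
  The sign sg is 1 for the (+) family and -1 for the (-) family.\<close>
definition s_fun :: "(real \<Rightarrow> real) \<Rightarrow> (real \<Rightarrow> real) \<Rightarrow> real \<Rightarrow> real" where
  "s_fun A B r = sqrt ((A r)^2 + (B r)^2 - 1)"

definition drho :: "(real \<Rightarrow> real) \<Rightarrow> (real \<Rightarrow> real) \<Rightarrow> real \<Rightarrow> real \<Rightarrow> real" where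
  "drho A B sg r =
     (A r * ((A r)^2 + (B r)^2 - 1) + sg * B r * s_fun A B r) / ((A r)^2 + (B r)^2)"

definition dphi :: "(real \<Rightarrow> real) \<Rightarrow> (real \<Rightarrow> real) \<Rightarrow> real \<Rightarrow> real \<Rightarrow> real" where
  "dphi A B sg r =
     s_fun A B r * (B r * s_fun A B r - sg * A r) / (r * ((A r)^2 + (B r)^2))"

text \<open>A horizon generated by the family with sign sg: a circle rho = c with c in the
  ergoregion (rm, rp) which is a closed trajectory of that family.\<close>
definition is_horizon ::
  "(real \<Rightarrow> real) \<Rightarrow> (real \<Rightarrow> real) \<Rightarrow> real \<Rightarrow> real \<Rightarrow> real \<Rightarrow> real \<Rightarrow> bool" where
  "is_horizon A B rm rp sg c \<longleftrightarrow>
     c \<in> {rm<..<rp} \<and> drho A B sg c = 0 \<and> dphi A B sg c \<noteq> 0"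

end

theory Submission
  imports Defs
begin

lemma key:
  fixes a b sg :: real
  assumes a: "a < 0" and e: "a^2+b^2 > 1" and sg: "sg = 1 \<or> sg = -1"
  shows "(a*(a^2+b^2-1) + sg*b* sqrt(a^2+b^2-1)) / (a^2+b^2) = 0 \<longleftrightarrow> a = -1 \<and> sg*b > 0"
proof -
  define s where "s = sqrt(a^2+b^2-1)"
  have s0: "s > 0" using e by (simp add: s_def)
  have s2: "s^2 = a^2+b^2-1" using e by (simp add: s_def)
  have num: "a*(a^2+b^2-1) + sg*b* s = s*(a* s + sg*b)"
  proof -
    have "a*(a^2+b^2-1) = a * s^2" using s2 by simp
    thus ?thesis by (simp add: power2_eq_square algebra_simps)
  qed
  have den: "a^2+b^2 \<noteq> 0" using e by linarith
  have "(a*(a^2+b^2-1) + sg*b* s) / (a^2+b^2) = 0 \<longleftrightarrow> s*(a* s + sg*b) = 0"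
    using den num by (simp only: divide_eq_0_iff) simp
  also have "\<dots> \<longleftrightarrow> a* s + sg*b = 0" using s0 by simp
  also have "\<dots> \<longleftrightarrow> a = -1 \<and> sg*b > 0"
  proof
    assume h: "a* s + sg*b = 0"
    have pos: "sg*b > 0" using h a s0 by (smt (verit) mult_neg_pos)
    have "a* s = -(sg*b)" using h by linarith
    hence "(a* s)^2 = (sg*b)^2" by simp
    hence "a^2*(a^2+b^2-1) = b^2" using sg s2 by (auto simp: power_mult_distrib)
    hence "(a^2-1)*(a^2+b^2) = 0" by (simp add: algebra_simps power2_eq_square)
    hence "a^2 = 1" using e by (simp, force)
    hence "a = -1" using a by (smt (verit) power2_eq_1_iff)
    thus "a = -1 \<and> sg*b > 0" using pos by simp
  next
    assume h: "a = -1 \<and> sg*b > 0"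
    hence "s = \<bar>b\<bar>" by (simp add: s_def)
    thus "a* s + sg*b = 0" using h sg by auto
  qed
  finally show ?thesis by (simp add: s_def)
qed

lemma key2:
  fixes b sg r :: real
  assumes "sg = 1 \<or> sg = -1" "sg*b > 0" "r > 0"
  shows "sqrt((-1)^2+b^2-1) * (b* sqrt((-1)^2+b^2-1) - sg*(-1)) / (r*((-1)^2+b^2)) \<noteq> 0"
proof -
  have "sqrt((-1)^2+b^2-1) = \<bar>b\<bar>" by simp
  moreover have "b \<noteq> 0" using assms by auto
  moreover have "b*\<bar>b\<bar> + sg \<noteq> 0"
  proof -
    have bb: "b*b > 0" using assms by (auto simp: zero_less_mult_iff)
    show ?thesis using assms(1,2) bb by (cases "b > 0") (auto simp: abs_if zero_less_mult_iff, smt (verit) bb, smt (verit) bb)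
  qed
  moreover have "1 + b^2 \<noteq> 0" by (smt (verit) zero_le_power2)
  ultimately show ?thesis using assms by simp
qed

theorem theorem4p3:
  fixes A B :: "real \<Rightarrow> real" and rm rp r0 r1 r2 :: real and I :: "real set"
  assumes rad: "0 \<le> rm" and lt: "rm < rp"
    and I: "is_interval I" "{rm..rp} \<subseteq> I"
    and smA: "smooth_on I A" and smB: "smooth_on I B"
    and bdry: "(A rm)^2 + (B rm)^2 = 1" "(A rp)^2 + (B rp)^2 = 1"
    and ergo: "\<forall>r\<in>{rm<..<rp}. (A r)^2 + (B r)^2 > 1"
    and Aneg: "\<forall>r\<in>{rm<..<rp}. A r < 0"
    and r12: "r1 < r2" "{r \<in> {rm<..<rp}. A r = -1} = {r1, r2}"
    and r0: "r0 \<in> {r1<..<r2}" "B r0 = 0"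
    and Bpos: "\<forall>r\<in>{rm<..<r0}. B r > 0"
    and Bneg: "\<forall>r\<in>{r0<..<rp}. B r < 0"
  shows "{c. is_horizon A B rm rp 1 c} = {r1} \<and> {c. is_horizon A B rm rp (-1) c} = {r2}"
proof -
  have r1i: "r1 \<in> {rm<..<rp}" "A r1 = -1" and r2i: "r2 \<in> {rm<..<rp}" "A r2 = -1"
    using r12(2) by blast+
  have Br1: "B r1 > 0" using Bpos r1i r0 by auto
  have Br2: "B r2 < 0" using Bneg r2i r0 by auto
  have gen: "is_horizon A B rm rp sg c \<longleftrightarrow> c \<in> {rm<..<rp} \<and> A c = -1 \<and> sg * B c > 0"
    if sg: "sg = 1 \<or> sg = -1" for sg c
  proof
    assume h: "is_horizon A B rm rp sg c"
    hence c: "c \<in> {rm<..<rp}" and d: "drho A B sg c = 0" by (auto simp: is_horizon_def)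
    have "A c = -1 \<and> sg * B c > 0"
      using d key[OF _ _ sg, of "A c" "B c"] Aneg ergo c by (auto simp: drho_def s_fun_def)
    thus "c \<in> {rm<..<rp} \<and> A c = -1 \<and> sg * B c > 0" using c by simp
  next
    assume h: "c \<in> {rm<..<rp} \<and> A c = -1 \<and> sg * B c > 0"
    have cpos: "c > 0" using h rad by auto
    have "drho A B sg c = 0"
      unfolding drho_def s_fun_def by (rule key[THEN iffD2]) (use h Aneg ergo sg in auto)
    moreover have "dphi A B sg c \<noteq> 0"
      using key2[OF sg, of "B c" c] h cpos by (simp add: dphi_def s_fun_def)
    ultimately show "is_horizon A B rm rp sg c" using h by (simp add: is_horizon_def)
  qed
  have "{c. is_horizon A B rm rp 1 c} = {r1}"
  proof (rule set_eqI, rule iffI)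
    fix c assume "c \<in> {c. is_horizon A B rm rp 1 c}"
    hence c: "c \<in> {rm<..<rp}" "A c = -1" "B c > 0" using gen[of 1 c] by auto
    hence "c = r1 \<or> c = r2" using r12(2) by blast
    thus "c \<in> {r1}" using c Br2 by auto
  next
    fix c assume "c \<in> {r1}" thus "c \<in> {c. is_horizon A B rm rp 1 c}" using gen[of 1 c] r1i Br1 by auto
  qed
  moreover have "{c. is_horizon A B rm rp (-1) c} = {r2}"
  proof (rule set_eqI, rule iffI)
    fix c assume "c \<in> {c. is_horizon A B rm rp (-1) c}"
    hence c: "c \<in> {rm<..<rp}" "A c = -1" "B c < 0" using gen[of "-1" c] by auto
    hence "c = r1 \<or> c = r2" using r12(2) by blast
    thus "c \<in> {r2}" using c Br1 by auto
  next
    fix c assume "c \<in> {r2}" thus "c \<in> {c. is_horizon A B rm rp (-1) c}" using gen[of "-1" c] r2i Br2 by auto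
  qed
  ultimately show ?thesis by simp
qed

end
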